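(* Let $R$ be a real closed field and let $V$ be an affine $R$-variety that is the union of two closed subvarieties $V_1$ and $V_2$ intersecting transversally in a single real point. Let $f\in R[V]$. If $f|_{V_1}$ is a sum of squares in $R[V_1]$ and $f|_{V_2}$ is a sum of squares in $R[V_2]$, then $f$ is a sum of squares in $R[V]$.
   Context: A variety is a reduced separated scheme of finite type, not necessarily irreducible; $R[W]$ denotes the coordinate ring of an affine variety $W$. For closed subvarieties $V_1,V_2$ of an affine $R$-variety $V$ meeting in finitely many points $P_1,\dots,P_r$, the intersection is called transversal if $I_{V_1}+I_{V_2}=\bigcap_{i=1}^r\mathfrak{m}_{P_i}$, where $I_{W}\subset R[V]$ is the vanishing ideal of $W$ and $\mathfrak{m}_P$ is the maximal ideal of the point $P$. A point is real if its residue field is $R$. *)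

theory Defs
  imports "HOL-Algebra.Algebra" "HOL-Computational_Algebra.Polynomial"
begin

text \<open>Real closed field (Artin--Schreier characterisation): -1 is not a sum of
squares, for every x either x or -x is a square, and every polynomial of odd
degree has a root.\<close>
definition real_closed_field :: "'r::field itself \<Rightarrow> bool" where
  "real_closed_field _ \<longleftrightarrow>
     (\<forall>xs :: 'r list. (\<Sum>x\<leftarrow>xs. x * x) \<noteq> - 1) \<and>
     (\<forall>x :: 'r. (\<exists>y. x = y * y) \<or> (\<exists>y. - x = y * y)) \<and>
     (\<forall>p :: 'r poly. odd (Polynomial.degree p) \<longrightarrow> (\<exists>x. poly p x = 0))"

definition sos :: "('a, 'b) ring_scheme \<Rightarrow> 'a \<Rightarrow> bool" where
  "sos A f \<longleftrightarrow> (\<exists>(n::nat) g. g \<in> {..<n} \<rightarrow> carrier A \<and>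
                     f = (\<Oplus>\<^bsub>A\<^esub> i\<in>{..<n}. g i \<otimes>\<^bsub>A\<^esub> g i))"

definition algebra_map :: "('r::field \<Rightarrow> 'a) \<Rightarrow> ('a, 'b) ring_scheme \<Rightarrow> bool" where
  "algebra_map phi A \<longleftrightarrow> cring A \<and> (\<forall>c. phi c \<in> carrier A) \<and>
     phi 0 = \<zero>\<^bsub>A\<^esub> \<and> phi 1 = \<one>\<^bsub>A\<^esub> \<and>
     (\<forall>c d. phi (c + d) = phi c \<oplus>\<^bsub>A\<^esub> phi d) \<and>
     (\<forall>c d. phi (c * d) = phi c \<otimes>\<^bsub>A\<^esub> phi d)"

inductive_set alg_gen :: "('r \<Rightarrow> 'a) \<Rightarrow> ('a, 'b) ring_scheme \<Rightarrow> 'a set \<Rightarrow> 'a set"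
  for phi A S where
  const: "phi c \<in> alg_gen phi A S"
| gen: "s \<in> S \<Longrightarrow> s \<in> alg_gen phi A S"
| add: "x \<in> alg_gen phi A S \<Longrightarrow> y \<in> alg_gen phi A S \<Longrightarrow> x \<oplus>\<^bsub>A\<^esub> y \<in> alg_gen phi A S"
| mult: "x \<in> alg_gen phi A S \<Longrightarrow> y \<in> alg_gen phi A S \<Longrightarrow> x \<otimes>\<^bsub>A\<^esub> y \<in> alg_gen phi A S"

text \<open>Coordinate ring of an affine R-variety: finitely generated reduced R-algebra.\<close>
definition affine_coordinate_ring :: "('r::field \<Rightarrow> 'a) \<Rightarrow> ('a, 'b) ring_scheme \<Rightarrow> bool" where
  "affine_coordinate_ring phi A \<longleftrightarrow> algebra_map phi A \<and>
     (\<exists>S. finite S \<and> S \<subseteq> carrier A \<and> alg_gen phi A S = carrier A) \<and>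
     (\<forall>x\<in>carrier A. \<forall>n::nat. x [^]\<^bsub>A\<^esub> n = \<zero>\<^bsub>A\<^esub> \<longrightarrow> x = \<zero>\<^bsub>A\<^esub>)"

text \<open>Radical ideal = vanishing ideal of a closed subvariety.\<close>
definition radical_ideal :: "'a set \<Rightarrow> ('a, 'b) ring_scheme \<Rightarrow> bool" where
  "radical_ideal I A \<longleftrightarrow> ideal I A \<and>
     (\<forall>x\<in>carrier A. \<forall>n::nat. x [^]\<^bsub>A\<^esub> n \<in> I \<longrightarrow> x \<in> I)"

text \<open>Maximal ideal of a real point: residue field is R (via phi).\<close>
definition real_point_ideal :: "('r::field \<Rightarrow> 'a) \<Rightarrow> 'a set \<Rightarrow> ('a, 'b) ring_scheme \<Rightarrow> bool" where
  "real_point_ideal phi m A \<longleftrightarrow> maximalideal m A \<and>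
     (\<forall>a\<in>carrier A. \<exists>c. a \<ominus>\<^bsub>A\<^esub> phi c \<in> m)"

end

theory Submission
  imports Defs
begin

inductive_set sqs :: "('a, 'b) ring_scheme \<Rightarrow> 'a set \<Rightarrow> 'a set" for R P where
  zero: "\<zero>\<^bsub>R\<^esub> \<in> sqs R P"
| step: "s \<in> sqs R P \<Longrightarrow> g \<in> P \<Longrightarrow> s \<oplus>\<^bsub>R\<^esub> g \<otimes>\<^bsub>R\<^esub> g \<in> sqs R P"

lemma rcf_fr:
  assumes "real_closed_field TYPE('r::field)" "(x::'r) * x + y * y = 0"
  shows "y = 0"
proof (rule ccontr)
  assume y: "y \<noteq> 0"
  have "(x/y) * (x/y) = (x*x) / (y*y)" by simp
  also have "x * x = - (y*y)" using assms(2) by (simp add: eq_neg_iff_add_eq_0)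
  finally have "(x/y) * (x/y) = -1" using y by simp
  hence "(\<Sum>z\<leftarrow>[x/y]. z * z) = -1" by simp
  thus False using assms(1) unfolding real_closed_field_def by blast
qed

lemma rcf_sq:
  assumes "real_closed_field TYPE('r::field)"
  shows "\<exists>e. e * e = (x::'r) * x + y * y"
proof -
  from assms have "(\<exists>e. x*x+y*y = e * e) \<or> (\<exists>z. -(x*x+y*y) = z * z)"
    unfolding real_closed_field_def by blast
  thus ?thesis
  proof
    assume "\<exists>z. -(x*x+y*y) = z * z"
    then obtain z where z: "-(x*x+y*y) = z * z" by blast
    show ?thesis
    proof (cases "z = 0")
      case True
      have "x*x+y*y = 0" using z True by (metis mult_zero_left neg_equal_0_iff_equal)
      then show ?thesis by (intro exI[of _ 0]) simp
    next
      case False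
      have h: "x*x+y*y = -(z*z)" using z by (metis minus_minus)
      have "(\<Sum>w\<leftarrow>[x/z, y/z]. w * w) = (x*x + y*y) / (z*z)"
        by (simp add: add_divide_distrib)
      also have "\<dots> = -1" using h False by simp
      finally show ?thesis using assms unfolding real_closed_field_def by blast
    qed
  qed (metis)
qed

context cring
begin

lemma id_rot1: "A \<in> carrier R \<Longrightarrow> B \<in> carrier R \<Longrightarrow> q \<in> carrier R \<Longrightarrow> g \<in> carrier R \<Longrightarrow>
  (A \<otimes> q \<oplus> B \<otimes> g) \<otimes> (A \<otimes> q \<oplus> B \<otimes> g) \<oplus> (B \<otimes> q \<ominus> A \<otimes> g) \<otimes> (B \<otimes> q \<ominus> A \<otimes> g) = (A \<otimes> A \<oplus> B \<otimes> B) \<otimes> (q \<otimes> q \<oplus> g \<otimes> g)"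
  by algebra
lemma id_rot2: "A \<in> carrier R \<Longrightarrow> B \<in> carrier R \<Longrightarrow> q \<in> carrier R \<Longrightarrow> g \<in> carrier R \<Longrightarrow> D \<in> carrier R \<Longrightarrow> E \<in> carrier R \<Longrightarrow> Aa \<in> carrier R \<Longrightarrow>
  (A \<otimes> q \<oplus> B \<otimes> g) \<ominus> E = A \<otimes> (q \<ominus> D) \<oplus> B \<otimes> (g \<ominus> Aa) \<oplus> (A \<otimes> D \<oplus> B \<otimes> Aa \<ominus> E)"
  by algebra
lemma id_rot3: "A \<in> carrier R \<Longrightarrow> B \<in> carrier R \<Longrightarrow> q \<in> carrier R \<Longrightarrow> g \<in> carrier R \<Longrightarrow> D \<in> carrier R \<Longrightarrow> Aa \<in> carrier R \<Longrightarrow>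
  B \<otimes> q \<ominus> A \<otimes> g = B \<otimes> (q \<ominus> D) \<ominus> A \<otimes> (g \<ominus> Aa) \<oplus> (B \<otimes> D \<ominus> A \<otimes> Aa)"
  by algebra
lemma id_ac1: "x \<in> carrier R \<Longrightarrow> y \<in> carrier R \<Longrightarrow> z \<in> carrier R \<Longrightarrow> x \<oplus> y \<oplus> z = x \<oplus> (y \<oplus> z)"
  by algebra
lemma id_ac2: "x \<in> carrier R \<Longrightarrow> y \<in> carrier R \<Longrightarrow> z \<in> carrier R \<Longrightarrow> x \<oplus> y \<oplus> z = y \<oplus> (x \<oplus> z)"
  by algebra
lemma id_ac3: "x \<in> carrier R \<Longrightarrow> y \<in> carrier R \<Longrightarrow> z \<in> carrier R \<Longrightarrow> x \<oplus> (y \<oplus> z) = y \<oplus> (x \<oplus> z)"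
  by algebra
lemma id_glue: "u \<in> carrier R \<Longrightarrow> v \<in> carrier R \<Longrightarrow> Y \<in> carrier R \<Longrightarrow> T \<in> carrier R \<Longrightarrow>
  Y \<oplus> v \<otimes> v \<ominus> (T \<oplus> (u \<oplus> v) \<otimes> (u \<oplus> v)) = (Y \<ominus> T) \<oplus> (\<ominus> u) \<otimes> (v \<oplus> (u \<oplus> v))"
  by algebra
lemma id_sub: "x \<in> carrier R \<Longrightarrow> y \<in> carrier R \<Longrightarrow> z \<in> carrier R \<Longrightarrow> x = y \<oplus> z \<Longrightarrow> y = x \<ominus> z"
  by algebra


lemma id_val: "f \<in> carrier R \<Longrightarrow> p \<in> carrier R \<Longrightarrow> q \<in> carrier R \<Longrightarrow> T \<in> carrier R \<Longrightarrow>
  f \<ominus> p \<otimes> p = (f \<ominus> (q \<otimes> q \<oplus> T)) \<oplus> T \<oplus> (q \<ominus> p) \<otimes> (q \<oplus> p)"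
  by algebra
lemma id_val2: "f \<in> carrier R \<Longrightarrow> a \<in> carrier R \<Longrightarrow> b \<in> carrier R \<Longrightarrow>
  a \<ominus> b = (f \<ominus> b) \<ominus> (f \<ominus> a)"
  by algebra
lemma id_neg: "q \<in> carrier R \<Longrightarrow> p \<in> carrier R \<Longrightarrow> \<ominus> q \<ominus> p = \<ominus> (q \<ominus> \<ominus> p)"
  by algebra
lemma id_diff: "a \<in> carrier R \<Longrightarrow> b \<in> carrier R \<Longrightarrow> p \<in> carrier R \<Longrightarrow> a \<ominus> b = (a \<ominus> p) \<ominus> (b \<ominus> p)"
  by algebra
lemma id_x: "a \<in> carrier R \<Longrightarrow> b \<in> carrier R \<Longrightarrow> u \<in> carrier R \<Longrightarrow> v \<in> carrier R \<Longrightarrow>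
  a \<ominus> b = u \<oplus> v \<Longrightarrow> a \<ominus> u = b \<oplus> v"
proof -
  assume c: "a \<in> carrier R" "b \<in> carrier R" "u \<in> carrier R" "v \<in> carrier R" and h: "a \<ominus> b = u \<oplus> v"
  have "a \<ominus> u = (a \<ominus> b) \<ominus> u \<oplus> b" using c by algebra
  also have "\<dots> = (u \<oplus> v) \<ominus> u \<oplus> b" by (simp only: h)
  also have "\<dots> = b \<oplus> v" using c by algebra
  finally show ?thesis .
qed
lemma id_fin1: "q \<in> carrier R \<Longrightarrow> u \<in> carrier R \<Longrightarrow> v \<in> carrier R \<Longrightarrow> Y1 \<in> carrier R \<Longrightarrow> Y2 \<in> carrier R \<Longrightarrow> T \<in> carrier R \<Longrightarrow> f \<in> carrier R \<Longrightarrow>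
  (q \<ominus> u) \<otimes> (q \<ominus> u) \<oplus> Y1 \<oplus> Y2 \<ominus> f = (\<ominus> u) \<otimes> ((q \<ominus> u) \<oplus> q) \<oplus> (Y1 \<ominus> T) \<oplus> Y2 \<ominus> (f \<ominus> (q \<otimes> q \<oplus> T))"
  by algebra
lemma id_fin2: "q \<in> carrier R \<Longrightarrow> u \<in> carrier R \<Longrightarrow> v \<in> carrier R \<Longrightarrow> Y1 \<in> carrier R \<Longrightarrow> Y2 \<in> carrier R \<Longrightarrow> T \<in> carrier R \<Longrightarrow> f \<in> carrier R \<Longrightarrow>
  (q \<oplus> v) \<otimes> (q \<oplus> v) \<oplus> Y1 \<oplus> Y2 \<ominus> f = v \<otimes> ((q \<oplus> v) \<oplus> q) \<oplus> Y1 \<oplus> (Y2 \<ominus> T) \<ominus> (f \<ominus> (q \<otimes> q \<oplus> T))"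
  by algebra
lemma id_eq: "a \<in> carrier R \<Longrightarrow> b \<in> carrier R \<Longrightarrow> a \<ominus> b = \<zero> \<Longrightarrow> a = b"
proof -
  assume c: "a \<in> carrier R" "b \<in> carrier R" and h: "a \<ominus> b = \<zero>"
  have "a = (a \<ominus> b) \<oplus> b" using c by algebra
  also have "\<dots> = \<zero> \<oplus> b" by (simp only: h)
  also have "\<dots> = b" using c by simp
  finally show ?thesis .
qed

lemma sqs_carrier: assumes "P \<subseteq> carrier R" "s \<in> sqs R P" shows "s \<in> carrier R"
  using assms(2) by (induction rule: sqs.induct) (use assms(1) in auto)

lemma sqs_ideal: "s \<in> sqs R I \<Longrightarrow> ideal I R \<Longrightarrow> s \<in> I"
  by (induction rule: sqs.induct)
     (auto simp: additive_subgroup.a_closed ideal.axioms(1) additive_subgroup.zero_closed ideal.I_r_closed ideal.Icarr)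

lemma sqs_add:
  assumes "P \<subseteq> carrier R" "s \<in> sqs R P" "t \<in> sqs R P"
  shows "s \<oplus> t \<in> sqs R P"
  using assms(3)
proof (induction rule: sqs.induct)
  case zero
  then show ?case using sqs_carrier[OF assms(1,2)] assms(2) by simp
next
  case (step t g)
  have c: "s \<in> carrier R" "t \<in> carrier R" "g \<in> carrier R"
    using sqs_carrier[OF assms(1,2)] sqs_carrier[OF assms(1) step(1)] step(2) assms(1) by auto
  have eq: "s \<oplus> (t \<oplus> g \<otimes> g) = (s \<oplus> t) \<oplus> g \<otimes> g" by (rule id_ac1[symmetric]) (use c in auto)
  show ?case unfolding eq by (rule sqs.step[OF step(3) step(2)])
qed

lemma sqs_sos: "s \<in> sqs R (carrier R) \<Longrightarrow> sos R s"
proof (induction rule: sqs.induct)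
  case zero
  show ?case unfolding sos_def by (rule exI[of _ 0]) auto
next
  case (step s g)
  then obtain n :: nat and h where h: "h \<in> {..<n} \<rightarrow> carrier R" "s = (\<Oplus>i\<in>{..<n}. h i \<otimes> h i)"
    unfolding sos_def by blast
  define h' where "h' = h(n := g)"
  have h'c: "h' \<in> {..<Suc n} \<rightarrow> carrier R" using h(1) step(2) by (auto simp: h'_def Pi_def less_Suc_eq)
  have e: "(\<Oplus>i\<in>{..<n}. h' i \<otimes> h' i) = (\<Oplus>i\<in>{..<n}. h i \<otimes> h i)"
    by (rule finsum_cong') (use h(1) in \<open>auto simp: h'_def\<close>)
  have "(\<Oplus>i\<in>{..<Suc n}. h' i \<otimes> h' i) = (\<Oplus>i\<in>insert n {..<n}. h' i \<otimes> h' i)"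
    by (simp add: lessThan_Suc)
  also have "\<dots> = h' n \<otimes> h' n \<oplus> (\<Oplus>i\<in>{..<n}. h' i \<otimes> h' i)"
    by (rule finsum_insert) (use h'c in auto)
  also have "\<dots> = g \<otimes> g \<oplus> s" unfolding e h(2)[symmetric] by (simp add: h'_def)
  also have "\<dots> = s \<oplus> g \<otimes> g"
  proof -
    have "s \<in> carrier R" unfolding h(2) by (rule finsum_closed) (use h(1) in auto)
    then show ?thesis by (rule a_comm[rotated]) (use step(2) in auto)
  qed
  finally have fin: "(\<Oplus>i\<in>{..<Suc n}. h' i \<otimes> h' i) = s \<oplus> g \<otimes> g" .
  show ?case unfolding sos_def
    by (rule exI[of _ "Suc n"], rule exI[of _ h'], rule conjI[OF h'c fin[symmetric]])
qed

lemma quot_sqs: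
  assumes I: "ideal I R"
  shows "g \<in> {..<(n::nat)} \<rightarrow> carrier (R Quot I) \<Longrightarrow>
    \<exists>S \<in> sqs R (carrier R). (\<Oplus>\<^bsub>R Quot I\<^esub> i\<in>{..<n}. g i \<otimes>\<^bsub>R Quot I\<^esub> g i) = I +> S"
proof (induction n)
  interpret Q: ring "R Quot I" by (rule ideal.quotient_is_ring[OF I])
  case 0
  have "\<zero>\<^bsub>R Quot I\<^esub> = I +> \<zero>"
    using a_rcos_zero[OF I] additive_subgroup.zero_closed[OF ideal.axioms(1)[OF I]]
    by (simp add: FactRing_def)
  then show ?case using sqs.zero[of R "carrier R"] by auto
next
  interpret Q: ring "R Quot I" by (rule ideal.quotient_is_ring[OF I])
  case (Suc n)
  have gc: "g \<in> {..<n} \<rightarrow> carrier (R Quot I)" using Suc(2) by auto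
  obtain S where S: "S \<in> sqs R (carrier R)"
    "(\<Oplus>\<^bsub>R Quot I\<^esub> i\<in>{..<n}. g i \<otimes>\<^bsub>R Quot I\<^esub> g i) = I +> S"
    using Suc(1)[OF gc] by blast
  have "g n \<in> carrier (R Quot I)" using Suc(2) by auto
  then obtain a where a: "a \<in> carrier R" "g n = I +> a"
    by (auto simp: FactRing_def A_RCOSETS_def')
  have Sc: "S \<in> carrier R" using sqs_carrier[OF _ S(1)] by simp
  have hom: "(+>) I \<in> ring_hom R (R Quot I)" by (rule ideal.rcos_ring_hom[OF I])
  have "(\<Oplus>\<^bsub>R Quot I\<^esub> i\<in>{..<Suc n}. g i \<otimes>\<^bsub>R Quot I\<^esub> g i)
      = (\<Oplus>\<^bsub>R Quot I\<^esub> i\<in>insert n {..<n}. g i \<otimes>\<^bsub>R Quot I\<^esub> g i)"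
    by (simp add: lessThan_Suc)
  also have "\<dots> = g n \<otimes>\<^bsub>R Quot I\<^esub> g n \<oplus>\<^bsub>R Quot I\<^esub> (\<Oplus>\<^bsub>R Quot I\<^esub> i\<in>{..<n}. g i \<otimes>\<^bsub>R Quot I\<^esub> g i)"
    by (rule Q.finsum_insert) (use Suc(2) in auto)
  also have "\<dots> = (I +> (a \<otimes> a)) \<oplus>\<^bsub>R Quot I\<^esub> (I +> S)"
    unfolding S(2) a(2) ring_hom_mult[OF hom a(1) a(1)] ..
  also have "\<dots> = (I +> S) \<oplus>\<^bsub>R Quot I\<^esub> (I +> (a \<otimes> a))"
    by (rule Q.a_comm) (use hom a Sc in \<open>auto intro: ring_hom_closed\<close>)
  also have "\<dots> = I +> (S \<oplus> a \<otimes> a)"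
    by (rule ring_hom_add[OF hom Sc, symmetric]) (use a in auto)
  finally show ?case using sqs.step[OF S(1), of a] a by blast
qed

lemma sos_quot:
  assumes I: "ideal I R" and f: "f \<in> carrier R" and s: "sos (R Quot I) (I +> f)"
  shows "\<exists>S \<in> sqs R (carrier R). f \<ominus> S \<in> I"
proof -
  obtain n :: nat and g where g: "g \<in> {..<n} \<rightarrow> carrier (R Quot I)"
    "I +> f = (\<Oplus>\<^bsub>R Quot I\<^esub> i\<in>{..<n}. g i \<otimes>\<^bsub>R Quot I\<^esub> g i)"
    using s unfolding sos_def by blast
  obtain S where S: "S \<in> sqs R (carrier R)" "I +> f = I +> S"
    using quot_sqs[OF I g(1)] g(2) by auto
  have Sc: "S \<in> carrier R" using sqs_carrier[OF _ S(1)] by simp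
  interpret II: ideal I R by (rule I)
  have "f \<in> I +> S" using II.a_repr_independenceD[OF f] S(2) by simp
  hence "f \<ominus> S \<in> I" using II.a_rcos_module_minus[OF ring_axioms Sc f] by simp
  thus ?thesis using S(1) by blast
qed

lemma ideal_facts:
  assumes "ideal I R"
  shows "x \<in> I \<Longrightarrow> y \<in> I \<Longrightarrow> x \<oplus> y \<in> I"
    and "x \<in> I \<Longrightarrow> y \<in> I \<Longrightarrow> x \<ominus> y \<in> I"
    and "x \<in> I \<Longrightarrow> \<ominus> x \<in> I"
    and "x \<in> I \<Longrightarrow> a \<in> carrier R \<Longrightarrow> a \<otimes> x \<in> I"
    and "x \<in> I \<Longrightarrow> x \<in> carrier R"
    and "\<zero> \<in> I"
  using assms
  by (auto simp: additive_subgroup.a_closed ideal.axioms(1) additive_subgroup.zero_closed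
      additive_subgroup.a_inv_closed ideal.I_l_closed ideal.Icarr minus_eq)

lemma phi_facts:
  fixes phi :: "'r::field \<Rightarrow> 'a"
  assumes "algebra_map phi R"
  shows "phi c \<in> carrier R" "phi (c + d) = phi c \<oplus> phi d" "phi (c * d) = phi c \<otimes> phi d"
    "phi 0 = \<zero>" "phi 1 = \<one>"
  using assms unfolding algebra_map_def by auto

lemma phi_diff:
  fixes phi :: "'r::field \<Rightarrow> 'a"
  assumes am: "algebra_map phi R"
  shows "phi (c - d) = phi c \<ominus> phi d"
proof -
  have "phi c = phi (c - d) \<oplus> phi d" using phi_facts(2)[OF am, of "c - d" d] by simp
  moreover have "phi c \<in> carrier R" "phi d \<in> carrier R" "phi (c - d) \<in> carrier R"
    using phi_facts(1)[OF am] by auto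
  ultimately show ?thesis using id_sub by blast
qed

lemma phi_minus:
  fixes phi :: "'r::field \<Rightarrow> 'a"
  assumes am: "algebra_map phi R"
  shows "phi (c - d) = phi c \<ominus> phi d" "phi (- c) = \<ominus> phi c"
proof -
  show "phi (c - d) = phi c \<ominus> phi d" by (rule phi_diff[OF am])
  have "phi (- c) = phi (0 - c)" by simp
  also have "\<dots> = phi 0 \<ominus> phi c" by (rule phi_diff[OF am])
  also have "\<dots> = \<ominus> phi c" using phi_facts(4)[OF am] phi_facts(1)[OF am, of c]
    by (simp add: minus_eq)
  finally show "phi (- c) = \<ominus> phi c" .
qed

lemma rotate:
  fixes phi :: "'r::field \<Rightarrow> 'a"
  assumes am: "algebra_map phi R" and mI: "ideal m R"
    and ev: "\<forall>a\<in>carrier R. \<exists>c. a \<ominus> phi c \<in> m"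
    and fr: "\<forall>x y::'r. x*x + y*y = 0 \<longrightarrow> y = 0"
    and sq: "\<forall>x y::'r. \<exists>e. e*e = x*x + y*y"
    and S: "S \<in> sqs R (carrier R)"
  shows "\<exists>q d S'. q \<in> carrier R \<and> S' \<in> sqs R m \<and> S = q \<otimes> q \<oplus> S' \<and> q \<ominus> phi d \<in> m"
  using S
proof (induction rule: sqs.induct)
  case zero
  show ?case
    by (rule exI[of _ \<zero>], rule exI[of _ 0], rule exI[of _ \<zero>])
       (simp add: sqs.zero phi_facts[OF am] ideal_facts[OF mI])
next
  case (step S g)
  then obtain q d S' where H: "q \<in> carrier R" "S' \<in> sqs R m" "S = q \<otimes> q \<oplus> S'" "q \<ominus> phi d \<in> m"
    by blast
  have mc: "m \<subseteq> carrier R" using ideal_facts(5)[OF mI] by blast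
  have S'c: "S' \<in> carrier R" using sqs_carrier[OF mc H(2)] .
  have gc: "g \<in> carrier R" using step(2) .
  obtain a where a: "g \<ominus> phi a \<in> m" using ev gc by blast
  obtain e where e: "e * e = d * d + a * a" using sq by blast
  show ?case
  proof (cases "e = 0")
    case True
    hence "a = 0" using fr[rule_format, of d a] e by simp
    hence gm: "g \<in> m" using a gc by (simp add: phi_facts[OF am] minus_eq)
    have "S \<oplus> g \<otimes> g = q \<otimes> q \<oplus> (S' \<oplus> g \<otimes> g)" unfolding H(3) by (rule id_ac1) (use H(1) S'c gc in auto)
    thus ?thesis using sqs.step[OF H(2) gm] H(1,4)
      by (intro exI[of _ q] exI[of _ d] exI[of _ "S' \<oplus> g \<otimes> g"]) simp
  next
    case False
    define \<alpha> where "\<alpha> = d / e"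
    define \<beta> where "\<beta> = a / e"
    have "\<alpha> * \<alpha> + \<beta> * \<beta> = (d*d + a*a) / (e*e)"
      by (simp add: \<alpha>_def \<beta>_def add_divide_distrib)
    also have "\<dots> = 1" using False by (simp add: e[symmetric])
    finally have f1: "\<alpha> * \<alpha> + \<beta> * \<beta> = 1" .
    have "\<alpha> * d + \<beta> * a = (d*d + a*a) / e"
      by (simp add: \<alpha>_def \<beta>_def add_divide_distrib)
    also have "\<dots> = e" using False by (simp add: e[symmetric])
    finally have f2: "\<alpha> * d + \<beta> * a - e = 0" by simp
    have f3: "\<beta> * d - \<alpha> * a = 0" using False
      by (simp add: \<alpha>_def \<beta>_def field_simps)
    define A where "A = phi \<alpha>"
    define B where "B = phi \<beta>"
    define D where "D = phi d"
    define E where "E = phi e"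
    define Aa where "Aa = phi a"
    have c: "A \<in> carrier R" "B \<in> carrier R" "D \<in> carrier R" "E \<in> carrier R" "Aa \<in> carrier R"
      unfolding A_def B_def D_def E_def Aa_def using phi_facts(1)[OF am] by auto
    have p1: "A \<otimes> A \<oplus> B \<otimes> B = \<one>"
      using arg_cong[OF f1, of phi] unfolding A_def B_def by (simp add: phi_facts[OF am])
    have p2: "A \<otimes> D \<oplus> B \<otimes> Aa \<ominus> E = \<zero>"
      using arg_cong[OF f2, of phi] unfolding A_def B_def D_def E_def Aa_def
      by (simp add: phi_facts[OF am] phi_minus[OF am])
    have p3: "B \<otimes> D \<ominus> A \<otimes> Aa = \<zero>"
      using arg_cong[OF f3, of phi] unfolding A_def B_def D_def Aa_def
      by (simp add: phi_facts[OF am] phi_minus[OF am])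
    define q' where "q' = A \<otimes> q \<oplus> B \<otimes> g"
    define r where "r = B \<otimes> q \<ominus> A \<otimes> g"
    have q'c: "q' \<in> carrier R" "r \<in> carrier R" unfolding q'_def r_def using c H(1) gc by auto
    have "q' \<otimes> q' \<oplus> r \<otimes> r = (A \<otimes> A \<oplus> B \<otimes> B) \<otimes> (q \<otimes> q \<oplus> g \<otimes> g)"
      unfolding q'_def r_def by (rule id_rot1) (use c H(1) gc in auto)
    hence sq1: "q' \<otimes> q' \<oplus> r \<otimes> r = q \<otimes> q \<oplus> g \<otimes> g" using p1 H(1) gc by simp
    have "S \<oplus> g \<otimes> g = q' \<otimes> q' \<oplus> (S' \<oplus> r \<otimes> r)"
    proof -
      have "S \<oplus> g \<otimes> g = S' \<oplus> (q \<otimes> q \<oplus> g \<otimes> g)" unfolding H(3) by (rule id_ac2) (use H(1) S'c gc in auto)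
      also have "\<dots> = S' \<oplus> (q' \<otimes> q' \<oplus> r \<otimes> r)" using sq1 by simp
      also have "\<dots> = q' \<otimes> q' \<oplus> (S' \<oplus> r \<otimes> r)" by (rule id_ac3) (use q'c S'c in auto)
      finally show ?thesis .
    qed
    define Xm where "Xm = q \<ominus> D"
    define Ym where "Ym = g \<ominus> Aa"
    have XY: "Xm \<in> m" "Ym \<in> m" using H(4) a unfolding Xm_def Ym_def D_def Aa_def by auto
    have XYc: "Xm \<in> carrier R" "Ym \<in> carrier R" using XY mc by auto
    have "q' \<ominus> E = A \<otimes> Xm \<oplus> B \<otimes> Ym \<oplus> (A \<otimes> D \<oplus> B \<otimes> Aa \<ominus> E)"
      unfolding q'_def Xm_def Ym_def by (rule id_rot2) (use c H(1) gc in auto)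
    also have "\<dots> = A \<otimes> Xm \<oplus> B \<otimes> Ym" unfolding p2 by (rule r_zero) (use c XYc in auto)
    finally have e1: "q' \<ominus> E = A \<otimes> Xm \<oplus> B \<otimes> Ym" .
    have "r = B \<otimes> Xm \<ominus> A \<otimes> Ym \<oplus> (B \<otimes> D \<ominus> A \<otimes> Aa)"
      unfolding r_def Xm_def Ym_def by (rule id_rot3) (use c H(1) gc in auto)
    also have "\<dots> = B \<otimes> Xm \<ominus> A \<otimes> Ym" unfolding p3 by (rule r_zero) (use c XYc in auto)
    finally have e2: "r = B \<otimes> Xm \<ominus> A \<otimes> Ym" .
    have "q' \<ominus> phi e \<in> m" unfolding E_def[symmetric] e1
      using XY c by (intro ideal_facts(1)[OF mI] ideal_facts(4)[OF mI]) auto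
    moreover have "r \<in> m" unfolding e2
      using XY c by (intro ideal_facts(2)[OF mI] ideal_facts(4)[OF mI]) auto
    ultimately show ?thesis using sqs.step[OF H(2)] q'c \<open>S \<oplus> g \<otimes> g = _\<close>
      by (intro exI[of _ q'] exI[of _ e] exI[of _ "S' \<oplus> r \<otimes> r"] conjI)
  qed
qed

lemma glue:
  assumes I: "ideal I R" and J: "ideal J R" and T: "T \<in> sqs R P"
    and sp: "\<forall>r\<in>P. \<exists>u\<in>I. \<exists>v\<in>J. r = u \<oplus> v"
  shows "\<exists>Y \<in> sqs R (carrier R). Y \<in> J \<and> Y \<ominus> T \<in> I"
  using T
proof (induction rule: sqs.induct)
  case zero
  have "\<zero> \<ominus> \<zero> = \<zero>" by (simp add: minus_eq)
  then show ?case using sqs.zero[of R "carrier R"] ideal_facts(6)[OF J] ideal_facts(6)[OF I]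
    ideal_facts(2)[OF I, of "\<zero>" "\<zero>"] by (intro bexI[of _ "\<zero>"]) auto
next
  case (step T r)
  have Pc: "P \<subseteq> carrier R"
    using sp ideal_facts(5)[OF I] ideal_facts(5)[OF J] by fastforce
  obtain Y where Y: "Y \<in> sqs R (carrier R)" "Y \<in> J" "Y \<ominus> T \<in> I" using step(3) by blast
  obtain u v where uv: "u \<in> I" "v \<in> J" "r = u \<oplus> v" using sp step(2) by blast
  have c: "u \<in> carrier R" "v \<in> carrier R" "Y \<in> carrier R" "T \<in> carrier R"
    using uv Y ideal_facts(5)[OF I] ideal_facts(5)[OF J] sqs_carrier[OF Pc step(1)] by auto
  have eq: "Y \<oplus> v \<otimes> v \<ominus> (T \<oplus> r \<otimes> r) = (Y \<ominus> T) \<oplus> (\<ominus> u) \<otimes> (v \<oplus> (u \<oplus> v))"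
    unfolding uv(3) by (rule id_glue) (use c in auto)
  have z: "(Y \<ominus> T) \<oplus> (\<ominus> u) \<otimes> (v \<oplus> (u \<oplus> v)) \<in> I"
    using Y(3) uv c
    by (intro ideal_facts(1)[OF I]) (auto simp: ideal.I_r_closed[OF I] ideal_facts(3)[OF I])
  have m1: "Y \<oplus> v \<otimes> v \<ominus> (T \<oplus> r \<otimes> r) \<in> I" unfolding eq by (rule z)
  have m2: "Y \<oplus> v \<otimes> v \<in> J" using Y(2) uv(2) c
    by (intro ideal_facts(1)[OF J] ideal_facts(4)[OF J]) auto
  have m3: "Y \<oplus> v \<otimes> v \<in> sqs R (carrier R)" using sqs.step[OF Y(1), of v] c by simp
  show ?case using m1 m2 m3 by (intro bexI[of _ "Y \<oplus> v \<otimes> v"] conjI)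
qed


lemma main_cring:
  fixes phi :: "'r::field \<Rightarrow> 'a"
  assumes rcf: "real_closed_field TYPE('r)"
    and am: "algebra_map phi R"
    and r1: "radical_ideal I1 R" and r2: "radical_ideal I2 R"
    and int: "I1 \<inter> I2 = {\<zero>}"
    and rp: "real_point_ideal phi m R"
    and sum: "I1 <+>\<^bsub>R\<^esub> I2 = m"
    and f: "f \<in> carrier R"
    and s1: "sos (R Quot I1) (I1 +> f)"
    and s2: "sos (R Quot I2) (I2 +> f)"
  shows "sos R f"
proof -
  have I1: "ideal I1 R" and I2: "ideal I2 R" using r1 r2 unfolding radical_ideal_def by auto
  have mmax: "maximalideal m R" and ev: "\<forall>a\<in>carrier R. \<exists>c. a \<ominus> phi c \<in> m"
    using rp unfolding real_point_ideal_def by auto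
  have mI: "ideal m R" using mmax by (rule maximalideal.axioms(1))
  have mc: "m \<subseteq> carrier R" using ideal_facts(5)[OF mI] by blast
  have one: "\<one> \<notin> m"
  proof
    assume "\<one> \<in> m"
    hence "m = carrier R" by (rule ideal.one_imp_carrier[OF mI])
    thus False using maximalideal.I_notcarr[OF mmax] by simp
  qed
  have phi0: "c = 0" if "phi c \<in> m" for c :: 'r
  proof (rule ccontr)
    assume "c \<noteq> 0"
    hence "phi (inverse c) \<otimes> phi c = \<one>"
      using phi_facts(3)[OF am, of "inverse c" c, symmetric] phi_facts(5)[OF am] by simp
    moreover have "phi (inverse c) \<otimes> phi c \<in> m"
      using that phi_facts(1)[OF am] by (intro ideal_facts(4)[OF mI])
    ultimately show False using one by simp
  qed
  have fr: "\<forall>x y::'r. x*x + y*y = 0 \<longrightarrow> y = 0" using rcf_fr[OF rcf] by blast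
  have sq: "\<forall>x y::'r. \<exists>e. e*e = x*x + y*y" using rcf_sq[OF rcf] by blast
  have msum: "m = (\<Union>h\<in>I1. \<Union>k\<in>I2. {h \<oplus> k})" using sum by (simp add: set_add_def')
  have split: "\<forall>r\<in>m. \<exists>u\<in>I1. \<exists>v\<in>I2. r = u \<oplus> v"
    using msum by blast
  have split': "\<forall>r\<in>m. \<exists>u\<in>I2. \<exists>v\<in>I1. r = u \<oplus> v"
  proof
    fix r assume "r \<in> m"
    then obtain u v where "u \<in> I1" "v \<in> I2" "r = u \<oplus> v" using split by blast
    moreover have "u \<oplus> v = v \<oplus> u"
      using \<open>u \<in> I1\<close> \<open>v \<in> I2\<close> ideal_facts(5)[OF I1] ideal_facts(5)[OF I2] by (simp add: a_comm)
    ultimately show "\<exists>u\<in>I2. \<exists>v\<in>I1. r = u \<oplus> v" by auto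
  qed
  have I1m: "I1 \<subseteq> m"
  proof
    fix x assume x: "x \<in> I1"
    have "x = x \<oplus> \<zero>" using ideal_facts(5)[OF I1 x] by simp
    thus "x \<in> m" unfolding msum using x ideal_facts(6)[OF I2] by blast
  qed
  have I2m: "I2 \<subseteq> m"
  proof
    fix x assume x: "x \<in> I2"
    have "x = \<zero> \<oplus> x" using ideal_facts(5)[OF I2 x] by simp
    thus "x \<in> m" unfolding msum using x ideal_facts(6)[OF I1] by blast
  qed
  obtain S1 where S1: "S1 \<in> sqs R (carrier R)" "f \<ominus> S1 \<in> I1" using sos_quot[OF I1 f s1] by blast
  obtain S2 where S2: "S2 \<in> sqs R (carrier R)" "f \<ominus> S2 \<in> I2" using sos_quot[OF I2 f s2] by blast
  obtain q1 d1 T1 where R1: "q1 \<in> carrier R" "T1 \<in> sqs R m" "S1 = q1 \<otimes> q1 \<oplus> T1" "q1 \<ominus> phi d1 \<in> m"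
    using rotate[OF am mI ev fr sq S1(1)] by blast
  obtain q2 d2 T2 where R2: "q2 \<in> carrier R" "T2 \<in> sqs R m" "S2 = q2 \<otimes> q2 \<oplus> T2" "q2 \<ominus> phi d2 \<in> m"
    using rotate[OF am mI ev fr sq S2(1)] by blast
  have T1c: "T1 \<in> carrier R" "T1 \<in> m" using sqs_carrier[OF mc R1(2)] sqs_ideal[OF R1(2) mI] by auto
  have T2c: "T2 \<in> carrier R" "T2 \<in> m" using sqs_carrier[OF mc R2(2)] sqs_ideal[OF R2(2) mI] by auto
  have S1c: "S1 \<in> carrier R" "S2 \<in> carrier R" using sqs_carrier S1(1) S2(1) by auto
  have pd: "phi d1 \<in> carrier R" "phi d2 \<in> carrier R" using phi_facts(1)[OF am] by auto
  have val: "f \<ominus> phi (d * d) \<in> m"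
    if "f \<ominus> S \<in> m" "S = q \<otimes> q \<oplus> T" "T \<in> m" "q \<ominus> phi d \<in> m" "q \<in> carrier R" "T \<in> carrier R"
    for S q T d
  proof -
    have pc: "phi d \<in> carrier R" using phi_facts(1)[OF am] by auto
    have "f \<ominus> phi (d * d) = (f \<ominus> S) \<oplus> T \<oplus> (q \<ominus> phi d) \<otimes> (q \<oplus> phi d)"
      unfolding phi_facts(3)[OF am] that(2) by (rule id_val) (use f pc that(5,6) in auto)
    also have "\<dots> \<in> m"
      using ideal_facts(1)[OF mI ideal_facts(1)[OF mI that(1) that(3)] ideal.I_r_closed[OF mI that(4)]] that(5) pc
      by auto
    finally show ?thesis .
  qed
  have v1: "f \<ominus> phi (d1 * d1) \<in> m"
    by (rule val[OF _ R1(3) T1c(2) R1(4) R1(1) T1c(1)]) (use S1(2) I1m in auto)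
  have v2: "f \<ominus> phi (d2 * d2) \<in> m"
    using val[OF _ R2(3) T2c(2) R2(4) R2(1) T2c(1)] S2(2) I2m by auto
  have "phi (d1 * d1 - d2 * d2) = (f \<ominus> phi (d2 * d2)) \<ominus> (f \<ominus> phi (d1 * d1))"
    unfolding phi_minus(1)[OF am] by (rule id_val2) (use f phi_facts(1)[OF am] in auto)
  also have "\<dots> \<in> m" using v1 v2 by (rule ideal_facts(2)[OF mI, rotated])
  finally have "d1 * d1 - d2 * d2 = 0" by (rule phi0)
  hence "d1 * d1 = d2 * d2" by simp
  hence "d1 = d2 \<or> d1 = - d2" by (simp add: square_eq_iff)
  hence dd: "d2 = d1 \<or> d2 = - d1" by auto
  obtain q2' where Q2: "q2' \<in> carrier R" "q2' \<otimes> q2' = q2 \<otimes> q2" "q2' \<ominus> phi d1 \<in> m"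
  proof (cases "d2 = d1")
    case True
    show ?thesis by (rule that[OF R2(1) refl]) (use R2(4) True in simp)
  next
    case False
    hence d: "d2 = - d1" using dd by simp
    have "\<ominus> q2 \<ominus> phi d1 = \<ominus> (q2 \<ominus> phi d2)"
      unfolding d phi_minus(2)[OF am] by (rule id_neg) (use R2(1) pd in auto)
    hence m2: "\<ominus> q2 \<ominus> phi d1 \<in> m" using R2(4) ideal_facts(3)[OF mI] by simp
    have m3: "\<ominus> q2 \<otimes> \<ominus> q2 = q2 \<otimes> q2" using R2(1) by algebra
    show ?thesis by (rule that[OF _ m3 m2]) (use R2(1) in simp)
  qed
  have "q1 \<ominus> q2' = (q1 \<ominus> phi d1) \<ominus> (q2' \<ominus> phi d1)"
    by (rule id_diff) (use R1(1) Q2(1) pd in auto)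
  also have "\<dots> \<in> m" using R1(4) Q2(3) by (rule ideal_facts(2)[OF mI])
  finally have "q1 \<ominus> q2' \<in> m" .
  then obtain u v where uv: "u \<in> I1" "v \<in> I2" "q1 \<ominus> q2' = u \<oplus> v" using split by blast
  have uvc: "u \<in> carrier R" "v \<in> carrier R" using uv ideal_facts(5)[OF I1] ideal_facts(5)[OF I2] by auto
  define x where "x = q1 \<ominus> u"
  have xc: "x \<in> carrier R" unfolding x_def using R1(1) uvc by auto
  have x2: "x = q2' \<oplus> v" unfolding x_def by (rule id_x[OF _ _ _ _ uv(3)]) (use R1(1) Q2(1) uvc in auto)
  obtain Y1 where Y1: "Y1 \<in> sqs R (carrier R)" "Y1 \<in> I2" "Y1 \<ominus> T1 \<in> I1"
    using glue[OF I1 I2 R1(2) split] by blast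
  obtain Y2 where Y2: "Y2 \<in> sqs R (carrier R)" "Y2 \<in> I1" "Y2 \<ominus> T2 \<in> I2"
    using glue[OF I2 I1 R2(2) split'] by blast
  have Yc: "Y1 \<in> carrier R" "Y2 \<in> carrier R" using sqs_carrier Y1(1) Y2(1) by auto
  define s where "s = x \<otimes> x \<oplus> Y1 \<oplus> Y2"
  have ssq: "s \<in> sqs R (carrier R)"
  proof -
    have "\<zero> \<oplus> x \<otimes> x \<in> sqs R (carrier R)" by (rule sqs.step[OF sqs.zero xc])
    hence "x \<otimes> x \<in> sqs R (carrier R)" using xc by simp
    thus ?thesis unfolding s_def using Y1(1) Y2(1) by (intro sqs_add) auto
  qed
  have in1: "s \<ominus> f \<in> I1"
  proof -
    have "s \<ominus> f = (\<ominus> u) \<otimes> (x \<oplus> q1) \<oplus> (Y1 \<ominus> T1) \<oplus> Y2 \<ominus> (f \<ominus> S1)"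
      unfolding s_def x_def R1(3) by (rule id_fin1) (use R1(1) uvc Yc T1c f in auto)
    also have "\<dots> \<in> I1"
      using ideal_facts(2)[OF I1 ideal_facts(1)[OF I1 ideal_facts(1)[OF I1 ideal.I_r_closed[OF I1 ideal_facts(3)[OF I1 uv(1)]] Y1(3)] Y2(2)] S1(2)]
        xc R1(1) by auto
    finally show ?thesis .
  qed
  have in2: "s \<ominus> f \<in> I2"
  proof -
    have S2': "S2 = q2' \<otimes> q2' \<oplus> T2" using R2(3) Q2(2) by simp
    have "s \<ominus> f = v \<otimes> (x \<oplus> q2') \<oplus> Y1 \<oplus> (Y2 \<ominus> T2) \<ominus> (f \<ominus> S2)"
      unfolding s_def x2 S2' by (rule id_fin2) (use Q2(1) uvc Yc T2c f in auto)
    also have "\<dots> \<in> I2"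
      using ideal_facts(2)[OF I2 ideal_facts(1)[OF I2 ideal_facts(1)[OF I2 ideal.I_r_closed[OF I2 uv(2)] Y1(2)] Y2(3)] S2(2)]
        xc Q2(1) by auto
    finally show ?thesis .
  qed
  have "s \<ominus> f = \<zero>" using in1 in2 int by blast
  hence "s = f" by (rule id_eq[rotated 2]) (use f sqs_carrier[OF subset_refl ssq] in auto)
  thus ?thesis using sqs_sos[OF ssq] by simp
qed

end

theorem proposition2p2:
  fixes phi :: "'r::field \<Rightarrow> 'a" and A :: "('a, 'b) ring_scheme"
    and I1 I2 m :: "'a set" and f :: 'a
  assumes "real_closed_field TYPE('r)"
    and "affine_coordinate_ring phi A"
    and "radical_ideal I1 A" and "radical_ideal I2 A"
    and "I1 \<inter> I2 = {\<zero>\<^bsub>A\<^esub>}"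
    and "real_point_ideal phi m A"
    and "I1 <+>\<^bsub>A\<^esub> I2 = m"
    and "f \<in> carrier A"
    and "sos (A Quot I1) (I1 +>\<^bsub>A\<^esub> f)"
    and "sos (A Quot I2) (I2 +>\<^bsub>A\<^esub> f)"
  shows "sos A f"
proof -
  have am: "algebra_map phi A" using assms(2) unfolding affine_coordinate_ring_def by blast
  have cr: "cring A" using am unfolding algebra_map_def by blast
  show ?thesis
    by (rule cring.main_cring[OF cr assms(1) am assms(3-10)])
qed

end
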